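(* Let $\mathfrak{G}$ be a non-redundant assembly graph and $\mathfrak{C}=\mathrm{CPC}(\mathfrak{G})$. Then the following finite strings are conductors for $\mathfrak{C}$: (i) any superstring of a conductor for $\mathfrak{C}$; (ii) any vertex, edge, or walk label in $\mathfrak{G}$; (iii) any string that is not a substring of $\mathfrak{C}$; (iv) any string that is at least as long as the longest edge label in $\mathfrak{G}$.
   Context: All strings are over a fixed finite alphabet $\Sigma$. A cyclic string is a bi-infinite periodic word $\mathbb{Z}\to\Sigma$, considered up to shifting indices; for a nonempty finite string $x$, $\langle x\rangle$ is the cyclic string repeating $x$ in both directions. A chromosome-set is a set of cyclic strings; a finite string is a substring of a chromosome-set if it is a contiguous block of one of its elements. A string $u$ is a proper infix of $w$ if $w=aub$ with $a,b$ nonempty. An abstract assembly graph is a finite directed multigraph in which each vertex and edge carries a label (a finite or cyclic string) such that for every edge $e$ from $u$ to $v$, $Label(u)$ is a prefix and $Label(v)$ a suffix of $Label(e)$. An edge $e$ from $u$ to $v$ is a prefix edge if $Label(e)=Label(v)$, a suffix edge if $Label(e)=Label(u)$. An assembly graph is an abstract assembly graph in which every vertex and edge lies on a directed cycle and no edge is both a prefix and a suffix edge. The label of a walk $v_0,e_1,\dots,e_n,v_n$ is $Label(e_1)$ followed, for $i\ge 2$, by $Label(e_i)$ with its first $|Label(v_{i-1})|$ characters removed; a walk with no edges has its vertex label. A circuit is a primitive closed walk up to rotation; if its walk label is $Label(v_0)x$, its label is $\langle x\rangle$. $\mathrm{CPC}(\mathfrak{G})$ is the set of circuit labels of $\mathfrak{G}$.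 $P$ is an inner subwalk of $Q$ if $Q=APB$ with walks $A,B$ each having at least one edge. The graph is non-redundant if whenever $Label(P)$ is a proper infix of $Label(Q)$ for walks $P,Q$, $P$ is an inner subwalk of $Q$. A finite string $v$ is a conductor for a chromosome-set $\mathfrak{C}$ if for all nonempty finite strings $a,b$ such that $va$ and $vb$ both end with $v$ (i.e. $va=a'v$, $vb=b'v$ for some $a',b'$), we have $\langle ab\rangle\in\mathfrak{C}$ if and only if $\langle a\rangle\in\mathfrak{C}$ and $\langle b\rangle\in\mathfrak{C}$. *)

theory Defs
  imports "Graph_Theory.Arc_Walk" "HOL-Library.Sublist"
begin

text \<open>A cyclic string is a bi-infinite periodic word int => 'a considered up to
  shifting indices; we represent it as its shift-orbit, a set of bi-infinite words.
  cyc x is the cyclic string repeating the (nonempty) finite string x.\<close>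

type_synonym 'a cyclic = "(int \<Rightarrow> 'a) set"

definition cyc :: "'a list \<Rightarrow> 'a cyclic" where
  "cyc x = {w. \<exists>k::int. \<forall>i::int. w i = x ! nat ((i + k) mod int (length x))}"

definition substring_of :: "'a cyclic set \<Rightarrow> 'a list \<Rightarrow> bool" where
  "substring_of C s \<longleftrightarrow>
     (\<exists>c\<in>C. \<exists>w\<in>c. \<exists>k::int. \<forall>i<length s. w (k + int i) = s ! i)"

definition proper_infix :: "'a list \<Rightarrow> 'a list \<Rightarrow> bool" where
  "proper_infix u w \<longleftrightarrow> (\<exists>a b. a \<noteq> [] \<and> b \<noteq> [] \<and> w = a @ u @ b)"

definition conductor :: "'a cyclic set \<Rightarrow> 'a list \<Rightarrow> bool" where
  "conductor C v \<longleftrightarrow>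
     (\<forall>a b. a \<noteq> [] \<longrightarrow> b \<noteq> [] \<longrightarrow> (\<exists>a'. v @ a = a' @ v) \<longrightarrow> (\<exists>b'. v @ b = b' @ v) \<longrightarrow>
        (cyc (a @ b) \<in> C \<longleftrightarrow> cyc a \<in> C \<and> cyc b \<in> C))"

definition abstract_assembly_graph ::
  "('v, 'e) pre_digraph \<Rightarrow> ('v \<Rightarrow> 'a list) \<Rightarrow> ('e \<Rightarrow> 'a list) \<Rightarrow> bool" where
  "abstract_assembly_graph G lv le \<longleftrightarrow> fin_digraph G \<and>
     (\<forall>e\<in>arcs G. prefix (lv (tail G e)) (le e) \<and> suffix (lv (head G e)) (le e))"

definition prefix_edge :: "('v, 'e) pre_digraph \<Rightarrow> ('v \<Rightarrow> 'a list) \<Rightarrow> ('e \<Rightarrow> 'a list) \<Rightarrow> 'e \<Rightarrow> bool" where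
  "prefix_edge G lv le e \<longleftrightarrow> le e = lv (head G e)"

definition suffix_edge :: "('v, 'e) pre_digraph \<Rightarrow> ('v \<Rightarrow> 'a list) \<Rightarrow> ('e \<Rightarrow> 'a list) \<Rightarrow> 'e \<Rightarrow> bool" where
  "suffix_edge G lv le e \<longleftrightarrow> le e = lv (tail G e)"

definition assembly_graph ::
  "('v, 'e) pre_digraph \<Rightarrow> ('v \<Rightarrow> 'a list) \<Rightarrow> ('e \<Rightarrow> 'a list) \<Rightarrow> bool" where
  "assembly_graph G lv le \<longleftrightarrow> abstract_assembly_graph G lv le \<and>
     (\<forall>v\<in>verts G. \<exists>p. pre_digraph.cycle G p \<and> pre_digraph.awalk G v p v) \<and>
     (\<forall>e\<in>arcs G. \<exists>p. pre_digraph.cycle G p \<and> e \<in> set p) \<and>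
     (\<forall>e\<in>arcs G. \<not> (prefix_edge G lv le e \<and> suffix_edge G lv le e))"

definition walk_label ::
  "('v, 'e) pre_digraph \<Rightarrow> ('v \<Rightarrow> 'a list) \<Rightarrow> ('e \<Rightarrow> 'a list) \<Rightarrow> 'v \<Rightarrow> 'e list \<Rightarrow> 'a list" where
  "walk_label G lv le v0 p =
     (case p of [] \<Rightarrow> lv v0
      | e # es \<Rightarrow> le e @ concat (map (\<lambda>f. drop (length (lv (tail G f))) (le f)) es))"

definition primitive_walk :: "'e list \<Rightarrow> bool" where
  "primitive_walk p \<longleftrightarrow> \<not> (\<exists>q k. 2 \<le> k \<and> p = concat (replicate k q))"

text \<open>Circuit labels: for a primitive closed walk at v0 with at least one edge whose
  walk label is Label(v0) x, the circuit label is cyc x. (Rotating the closed walk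
  does not change the cyclic string, so this is the set of circuit labels.)\<close>

definition CPC ::
  "('v, 'e) pre_digraph \<Rightarrow> ('v \<Rightarrow> 'a list) \<Rightarrow> ('e \<Rightarrow> 'a list) \<Rightarrow> 'a cyclic set" where
  "CPC G lv le = {cyc x | x v0 p. pre_digraph.awalk G v0 p v0 \<and> p \<noteq> [] \<and> primitive_walk p
                              \<and> walk_label G lv le v0 p = lv v0 @ x}"

definition inner_subwalk ::
  "('v, 'e) pre_digraph \<Rightarrow> 'v \<Rightarrow> 'e list \<Rightarrow> 'v \<Rightarrow> 'e list \<Rightarrow> bool" where
  "inner_subwalk G u ps w qs \<longleftrightarrow>
     (\<exists>as bs. as \<noteq> [] \<and> bs \<noteq> [] \<and> qs = as @ ps @ bs \<and> pre_digraph.awalk G w as u)"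

definition non_redundant ::
  "('v, 'e) pre_digraph \<Rightarrow> ('v \<Rightarrow> 'a list) \<Rightarrow> ('e \<Rightarrow> 'a list) \<Rightarrow> bool" where
  "non_redundant G lv le \<longleftrightarrow>
     (\<forall>u ps u' w qs w'. pre_digraph.awalk G u ps u' \<longrightarrow> pre_digraph.awalk G w qs w' \<longrightarrow>
        proper_infix (walk_label G lv le u ps) (walk_label G lv le w qs) \<longrightarrow>
        inner_subwalk G u ps w qs)"

end

theory Submission
  imports Defs
begin


definition pn :: "'a list \<Rightarrow> nat \<Rightarrow> 'a" where
  "pn y j = y ! (j mod length y)"

lemma nth_concat_replicate:
  assumes "j < k * length y"
  shows "concat (replicate k y) ! j = y ! (j mod length y)"
  using assms
proof (induction k arbitrary: j)
  case 0 then show ?case by simp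
next
  case (Suc k)
  show ?case
  proof (cases "j < length y")
    case True then show ?thesis by (simp add: nth_append)
  next
    case False
    then have "j - length y < k * length y" using Suc.prems by auto
    then have "concat (replicate k y) ! (j - length y) = y ! ((j - length y) mod length y)"
      using Suc.IH by blast
    moreover have "(j - length y) mod length y = j mod length y"
      using False by (simp add: le_mod_geq)
    ultimately show ?thesis using False by (simp add: nth_append)
  qed
qed

lemma length_concat_replicate[simp]: "length (concat (replicate k y)) = k * length y"
  by (induction k) auto

lemma cyc_eqI:
  assumes "x \<noteq> []" "y \<noteq> []"
    and "\<And>j::int. x ! nat (j mod int (length x)) = y ! nat ((j + d) mod int (length y))"
  shows "cyc x = cyc y"
proof
  show "cyc x \<subseteq> cyc y"
  proof
    fix w assume "w \<in> cyc x"
    then obtain k where k: "\<forall>i. w i = x ! nat ((i + k) mod int (length x))"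
      unfolding cyc_def by blast
    have "\<forall>i. w i = y ! nat ((i + (k + d)) mod int (length y))"
      using k assms(3) by (simp add: add.assoc)
    then show "w \<in> cyc y" unfolding cyc_def by blast
  qed
next
  show "cyc y \<subseteq> cyc x"
  proof
    fix w assume "w \<in> cyc y"
    then obtain k where k: "\<forall>i. w i = y ! nat ((i + k) mod int (length y))"
      unfolding cyc_def by blast
    have "\<forall>i. w i = x ! nat ((i + (k - d)) mod int (length x))"
    proof
      fix i
      have "x ! nat ((i + (k - d)) mod int (length x)) = y ! nat ((i + (k - d) + d) mod int (length y))"
        using assms(3) by blast
      then show "w i = x ! nat ((i + (k - d)) mod int (length x))" using k by simp
    qed
    then show "w \<in> cyc x" unfolding cyc_def by blast
  qed
qed

lemma cyc_rotate:
  assumes "x \<noteq> []"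
  shows "cyc (rotate m x) = cyc x"
proof (rule cyc_eqI[where d = "int m"])
  show "rotate m x \<noteq> []" using assms by simp
  show "x \<noteq> []" by fact
  fix j :: int
  let ?n = "int (length x)"
  have n: "?n > 0" using assms by simp
  have lt: "nat (j mod ?n) < length x" using n
    by (metis nat_less_iff pos_mod_bound pos_mod_sign)
  have "rotate m x ! nat (j mod ?n) = x ! ((m + nat (j mod ?n)) mod length x)"
    using lt by (simp add: nth_rotate)
  also have "(m + nat (j mod ?n)) mod length x = nat ((j + int m) mod ?n)"
  proof -
    have "int ((m + nat (j mod ?n)) mod length x) = (int m + j mod ?n) mod ?n"
      using n by (simp add: zmod_int)
    also have "\<dots> = (j + int m) mod ?n" by (simp add: mod_add_right_eq add.commute)
    finally show ?thesis by simp
  qed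
  finally show "rotate m x ! nat (j mod int (length (rotate m x))) = x ! nat ((j + int m) mod int (length x))"
    by simp
qed

lemma cyc_swap:
  assumes "p @ q \<noteq> []"
  shows "cyc (q @ p) = cyc (p @ q)"
  using cyc_rotate[OF assms, of "length p"] by (simp add: rotate_append)

lemma cyc_power:
  assumes "x \<noteq> []" "k \<ge> 1"
  shows "cyc (concat (replicate k x)) = cyc x"
proof (rule cyc_eqI[where d = 0])
  show "concat (replicate k x) \<noteq> []" using assms by (cases k) auto
  show "x \<noteq> []" by fact
  fix j :: int
  let ?n = "int (length x)"
  let ?N = "int (k * length x)"
  have n: "?n > 0" using assms by simp
  have N: "?N > 0" using assms by simp
  have lt: "nat (j mod ?N) < k * length x" using N
    by (metis nat_less_iff pos_mod_bound pos_mod_sign)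
  have "concat (replicate k x) ! nat (j mod ?N) = x ! (nat (j mod ?N) mod length x)"
    using nth_concat_replicate[OF lt] .
  also have "nat (j mod ?N) mod length x = nat (j mod ?n)"
  proof -
    have "int (nat (j mod ?N) mod length x) = (j mod ?N) mod ?n"
      using N n by (simp add: zmod_int)
    also have "\<dots> = j mod ?n"
      by (simp add: mod_mod_cancel)
    finally show ?thesis by simp
  qed
  finally show "concat (replicate k x) ! nat (j mod int (length (concat (replicate k x)))) =
      x ! nat ((j + 0) mod int (length x))" by simp
qed



lemma pn_add_mult: "pn c (j + k * length c) = pn c j"
  unfolding pn_def by simp

lemma pn_add_len: "pn c (j + length c) = pn c j"
  using pn_add_mult[of c j 1] by simp

lemma suffix_period:
  assumes "c \<noteq> []" "suffix v (v @ c)" "i < length v + length c"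
  shows "(v @ c) ! i = pn c (i + (length c - length v mod length c))"
  using assms(3)
proof (induction "length v + length c - i" arbitrary: i rule: less_induct)
  case less
  obtain c' where c': "v @ c = c' @ v" using assms(2) unfolding suffix_def by blast
  have lc': "length c' = length c" using arg_cong[OF c', of length] by simp
  show ?case
  proof (cases "i < length v")
    case True
    have "(v @ c) ! i = v ! i" using True by (simp add: nth_append)
    also have "\<dots> = (c' @ v) ! (i + length c)" using lc' by (simp add: nth_append)
    also have "\<dots> = (v @ c) ! (i + length c)" using c' by simp
    also have "\<dots> = pn c (i + length c + (length c - length v mod length c))"
    proof -
      have lt: "length v + length c - (i + length c) < length v + length c - i"
        "i + length c < length v + length c" using True assms(1) by (simp_all add: less_diff_conv)
      show ?thesis using less.hyps[OF lt] by simp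
    qed
    also have "\<dots> = pn c (i + (length c - length v mod length c))"
      using pn_add_len[of c "i + (length c - length v mod length c)"] by (simp add: algebra_simps)
    finally show ?thesis .
  next
    case False
    then obtain r where r: "i = length v + r" "r < length c" using less.prems
      by (metis add_less_cancel_left le_Suc_ex not_less)
    have "(v @ c) ! i = c ! r" using r by (simp add: nth_append)
    moreover have "(i + (length c - length v mod length c)) mod length c = r"
    proof -
      have m: "length v mod length c < length c" using assms(1) by simp
      define q where "q = length v div length c"
      define s where "s = length v mod length c"
      have qs: "length v = q * length c + s" unfolding q_def s_def by simp
      have sl: "s < length c" using m unfolding s_def .
      have "i + (length c - s) = r + (q + 1) * length c"
        using r sl qs by (simp add: algebra_simps)
      then have "i + (length c - length v mod length c) = r + (q + 1) * length c"
        unfolding s_def .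
      then have "(i + (length c - length v mod length c)) mod length c = (r + (q + 1) * length c) mod length c"
        by (rule arg_cong)
      also have "\<dots> = r" using r by (metis mod_less mod_mult_self1)
      finally show ?thesis .
    qed
    ultimately show ?thesis unfolding pn_def by simp
  qed
qed

lemma conductor_prepend:
  assumes "conductor C u"
  shows "conductor C (x @ u)"
  unfolding conductor_def
proof (intro allI impI)
  fix a b :: "'a list"
  assume a: "a \<noteq> []" and b: "b \<noteq> []" and sa: "\<exists>a'. (x @ u) @ a = a' @ x @ u"
    and sb: "\<exists>b'. (x @ u) @ b = b' @ x @ u"
  have "\<exists>a'. u @ a = a' @ u"
  proof -
    obtain a' where "x @ u @ a = a' @ x @ u" using sa by auto
    from \<open>x @ u @ a = a' @ x @ u\<close> have "suffix u (x @ u @ a)" unfolding suffix_def by auto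
    then obtain p where p: "x @ u @ a = p @ u" unfolding suffix_def by auto
    have "length p \<ge> length x" using arg_cong[OF p, of length] by simp
    then have "u @ a = drop (length x) p @ u"
      using p by (metis append_eq_append_conv_if append_eq_conv_conj)
    then show ?thesis by blast
  qed
  moreover have "\<exists>b'. u @ b = b' @ u"
  proof -
    obtain b' where "x @ u @ b = b' @ x @ u" using sb by auto
    then have "suffix u (x @ u @ b)" unfolding suffix_def by auto
    then obtain p where p: "x @ u @ b = p @ u" unfolding suffix_def by auto
    have "length p \<ge> length x" using arg_cong[OF p, of length] by simp
    then have "u @ b = drop (length x) p @ u"
      using p by (metis append_eq_append_conv_if append_eq_conv_conj)
    then show ?thesis by blast
  qed
  ultimately show "cyc (a @ b) \<in> C \<longleftrightarrow> cyc a \<in> C \<and> cyc b \<in> C"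
    using assms a b unfolding conductor_def by blast
qed



lemma snoc_shift:
  assumes "(u @ [ch]) @ a = a' @ u @ [ch]" "a \<noteq> []"
  shows "a = butlast a @ [ch] \<and> u @ (ch # butlast a) = a' @ u"
proof -
  have l: "last a = ch" using arg_cong[OF assms(1), of last] assms(2) by simp
  then have a: "a = butlast a @ [ch]" using assms(2) by (metis append_butlast_last_id)
  have "u @ [ch] @ butlast a @ [ch] = a' @ u @ [ch]" using assms(1) a by (metis append.assoc)
  then have "u @ [ch] @ butlast a = a' @ u"
    using arg_cong[of _ _ butlast] by (metis append.assoc butlast_snoc)
  then show ?thesis using a by simp
qed

lemma conductor_snoc:
  assumes "conductor C u"
  shows "conductor C (u @ [ch])"
  unfolding conductor_def
proof (intro allI impI)
  fix a b :: "'a list"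
  assume a: "a \<noteq> []" and b: "b \<noteq> []" and sa: "\<exists>a'. (u @ [ch]) @ a = a' @ u @ [ch]"
    and sb: "\<exists>b'. (u @ [ch]) @ b = b' @ u @ [ch]"
  obtain a' where a': "(u @ [ch]) @ a = a' @ u @ [ch]" using sa by blast
  obtain b' where b': "(u @ [ch]) @ b = b' @ u @ [ch]" using sb by blast
  note A = snoc_shift[OF a' a] and B = snoc_shift[OF b' b]
  define a2 where "a2 = ch # butlast a"
  define b2 where "b2 = ch # butlast b"
  have c: "cyc (a2 @ b2) \<in> C \<longleftrightarrow> cyc a2 \<in> C \<and> cyc b2 \<in> C"
    using assms A B unfolding conductor_def a2_def b2_def by blast
  have ca: "cyc a2 = cyc a"
  proof -
    have "cyc ([ch] @ butlast a) = cyc (butlast a @ [ch])" by (rule cyc_swap) simp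
    then show ?thesis using A unfolding a2_def by simp
  qed
  have cb: "cyc b2 = cyc b"
  proof -
    have "cyc ([ch] @ butlast b) = cyc (butlast b @ [ch])" by (rule cyc_swap) simp
    then show ?thesis using B unfolding b2_def by simp
  qed
  have cab: "cyc (a2 @ b2) = cyc (a @ b)"
  proof -
    have "cyc ([ch] @ (butlast a @ [ch] @ butlast b)) = cyc ((butlast a @ [ch] @ butlast b) @ [ch])"
      by (rule cyc_swap) simp
    moreover have "a @ b = (butlast a @ [ch] @ butlast b) @ [ch]" using A B
      by (metis append.assoc)
    ultimately show ?thesis unfolding a2_def b2_def by simp
  qed
  show "cyc (a @ b) \<in> C \<longleftrightarrow> cyc a \<in> C \<and> cyc b \<in> C" using c ca cb cab by simp
qed

lemma conductor_append:
  assumes "conductor C u"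
  shows "conductor C (u @ y)"
  using assms
proof (induction y rule: rev_induct)
  case Nil then show ?case by simp
next
  case (snoc ch y)
  then show ?case using conductor_snoc[of C "u @ y" ch] by simp
qed

lemma conductor_sublist:
  assumes "conductor C u" "sublist u s"
  shows "conductor C s"
proof -
  obtain x y where "s = x @ u @ y" using assms(2) unfolding sublist_def by blast
  then show ?thesis using conductor_prepend[OF conductor_append[OF assms(1)]] by simp
qed

lemma substring_from_cyc:
  assumes "c \<noteq> []" "suffix v (v @ c)" "cyc c \<in> C"
  shows "substring_of C v"
proof -
  define off where "off = length c - length v mod length c"
  define w where "w = (\<lambda>i::int. c ! nat ((i + 0) mod int (length c)))"
  have w: "w \<in> cyc c" unfolding cyc_def w_def by blast
  have "\<forall>i<length v. w (int off + int i) = v ! i"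
  proof (intro allI impI)
    fix i assume i: "i < length v"
    have "w (int off + int i) = c ! ((off + i) mod length c)"
    proof -
      have "(int off + int i) mod int (length c) = int ((off + i) mod length c)"
        by (simp add: zmod_int)
      then show ?thesis unfolding w_def by simp
    qed
    also have "\<dots> = pn c (i + off)" unfolding pn_def by (simp add: add.commute)
    also have "\<dots> = (v @ c) ! i" using suffix_period[OF assms(1,2), of i] i unfolding off_def by simp
    also have "\<dots> = v ! i" using i by (simp add: nth_append)
    finally show "w (int off + int i) = v ! i" .
  qed
  then show ?thesis unfolding substring_of_def using w assms(3) by blast
qed

lemma conductor_nonsubstring:
  assumes "\<not> substring_of C s"
  shows "conductor C s"
  unfolding conductor_def
proof (intro allI impI)
  fix a b :: "'a list"
  assume a: "a \<noteq> []" and b: "b \<noteq> []" and sa: "\<exists>a'. s @ a = a' @ s"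
    and sb: "\<exists>b'. s @ b = b' @ s"
  have sa': "suffix s (s @ a)" using sa unfolding suffix_def by metis
  have sb': "suffix s (s @ b)" using sb unfolding suffix_def by metis
  have sab: "suffix s (s @ a @ b)"
  proof -
    obtain a' where a': "s @ a = a' @ s" using sa by blast
    obtain b' where b': "s @ b = b' @ s" using sb by blast
    have "s @ a @ b = a' @ b' @ s" using a' b' by (metis append.assoc)
    then show ?thesis unfolding suffix_def by (metis append.assoc)
  qed
  have "cyc a \<notin> C" using substring_from_cyc[OF a sa'] assms by blast
  moreover have "cyc b \<notin> C" using substring_from_cyc[OF b sb'] assms by blast
  moreover have "cyc (a @ b) \<notin> C" using substring_from_cyc[of "a @ b" s C] a sab assms by blast
  ultimately show "cyc (a @ b) \<in> C \<longleftrightarrow> cyc a \<in> C \<and> cyc b \<in> C" by blast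
qed



definition extn :: "('v, 'e) pre_digraph \<Rightarrow> ('v \<Rightarrow> 'a list) \<Rightarrow> ('e \<Rightarrow> 'a list) \<Rightarrow> 'e \<Rightarrow> 'a list" where
  "extn G lv le e = drop (length (lv (tail G e))) (le e)"

definition XL :: "('v, 'e) pre_digraph \<Rightarrow> ('v \<Rightarrow> 'a list) \<Rightarrow> ('e \<Rightarrow> 'a list) \<Rightarrow> 'e list \<Rightarrow> 'a list" where
  "XL G lv le p = concat (map (extn G lv le) p)"

lemma XL_Nil[simp]: "XL G lv le [] = []" by (simp add: XL_def)
lemma XL_Cons[simp]: "XL G lv le (e # p) = extn G lv le e @ XL G lv le p" by (simp add: XL_def)
lemma XL_append[simp]: "XL G lv le (p @ q) = XL G lv le p @ XL G lv le q" by (simp add: XL_def)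

lemma concat_replicate_add:
  "concat (replicate (m + n) r) = concat (replicate m r) @ concat (replicate n r)"
  by (simp add: replicate_add)

lemma concat_replicate_mult:
  "concat (replicate k (concat (replicate j r))) = concat (replicate (k * j) r)"
  by (induction k) (auto simp: concat_replicate_add)

lemma XL_power: "XL G lv le (concat (replicate k Z)) = concat (replicate k (XL G lv le Z))"
  by (induction k) auto

context wf_digraph
begin

lemma le_ext:
  assumes "abstract_assembly_graph G lv le" "e \<in> arcs G"
  shows "le e = lv (tail G e) @ extn G lv le e"
  using assms unfolding abstract_assembly_graph_def extn_def prefix_def by auto

lemma le_suffix:
  assumes "abstract_assembly_graph G lv le" "e \<in> arcs G"
  shows "suffix (lv (head G e)) (le e)"
  using assms unfolding abstract_assembly_graph_def by auto

lemma walk_label_X: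
  assumes "abstract_assembly_graph G lv le" "awalk u p w"
  shows "walk_label G lv le u p = lv u @ XL G lv le p"
proof (cases p)
  case Nil then show ?thesis by (simp add: walk_label_def)
next
  case (Cons e es)
  then have "e \<in> arcs G" "tail G e = u" using assms(2) by (auto simp: awalk_Cons_iff)
  have fx: "extn G lv le = (\<lambda>f. drop (length (lv (tail G f))) (le f))"
    by (simp add: fun_eq_iff extn_def)
  have "le e = lv u @ extn G lv le e" using le_ext[OF assms(1) \<open>e \<in> arcs G\<close>] \<open>tail G e = u\<close> by simp
  then show ?thesis using Cons fx
    by (simp add: walk_label_def XL_def)
qed

lemma label_suffix:
  assumes "abstract_assembly_graph G lv le" "awalk u p w"
  shows "suffix (lv w) (lv u @ XL G lv le p)"
  using assms(2)
proof (induction p arbitrary: u)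
  case Nil then show ?case by (simp add: awalk_Nil_iff)
next
  case (Cons e es)
  then have e: "e \<in> arcs G" "tail G e = u" "awalk (head G e) es w" by (auto simp: awalk_Cons_iff)
  have "suffix (lv w) (lv (head G e) @ XL G lv le es)" using Cons.IH e(3) .
  moreover obtain al where al: "le e = al @ lv (head G e)"
    using le_suffix[OF assms(1) e(1)] unfolding suffix_def by blast
  moreover have "lv u @ XL G lv le (e # es) = le e @ XL G lv le es"
    using le_ext[OF assms(1) e(1)] e(2) by simp
  ultimately show ?case unfolding suffix_def by (metis append.assoc)
qed

lemma awalk_power:
  assumes "awalk z Z z"
  shows "awalk z (concat (replicate k Z)) z"
  using assms
  by (induction k) (auto simp: awalk_Nil_iff awalk_hd_in_verts)

lemma awlast_closed:
  assumes "awalk z Z z'"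
  shows "awlast z Z = z'"
  using assms by (auto elim: awalkE)

lemma XL_nonempty:
  assumes "assembly_graph G lv le" "awalk z Z z" "Z \<noteq> []"
  shows "XL G lv le Z \<noteq> []"
proof
  assume X: "XL G lv le Z = []"
  have AG: "abstract_assembly_graph G lv le" using assms(1) unfolding assembly_graph_def by blast
  obtain e es where Z: "Z = e # es" using assms(3) by (cases Z) auto
  then have e: "e \<in> arcs G" "tail G e = z" "awalk (head G e) es z"
    using assms(2) by (auto simp: awalk_Cons_iff)
  have xe: "extn G lv le e = []" and xes: "XL G lv le es = []" using X Z by auto
  have lee: "le e = lv z" using le_ext[OF AG e(1)] xe e(2) by simp
  have "suffix (lv z) (lv (head G e))" using label_suffix[OF AG e(3)] xes by simp
  then have l1: "length (lv z) \<le> length (lv (head G e))" by (rule suffix_length_le)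
  have s2: "suffix (lv (head G e)) (le e)" using le_suffix[OF AG e(1)] .
  then have "length (lv (head G e)) \<le> length (le e)" by (rule suffix_length_le)
  then have "lv (head G e) = le e" using s2 l1 lee
    by (metis le_antisym suffix_length_suffix suffix_order.antisym suffix_order.refl)
  then have "prefix_edge G lv le e \<and> suffix_edge G lv le e"
    unfolding prefix_edge_def suffix_edge_def using lee e(2) by simp
  then show False using assms(1) e(1) unfolding assembly_graph_def by blast
qed

end

lemma primitive_root:
  assumes "p \<noteq> []"
  shows "\<exists>q k. primitive_walk q \<and> k \<ge> 1 \<and> p = concat (replicate k q)"
  using assms
proof (induction "length p" arbitrary: p rule: less_induct)
  case less
  show ?case
  proof (cases "primitive_walk p")
    case True
    then show ?thesis by (intro exI[of _ p] exI[of _ 1]) simp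
  next
    case False
    then obtain q k where qk: "2 \<le> k" "p = concat (replicate k q)" unfolding primitive_walk_def by blast
    have "q \<noteq> []" using qk less.prems by auto
    then have "length q < length p" using qk by simp
    then obtain r j where rj: "primitive_walk r" "j \<ge> 1" "q = concat (replicate j r)"
      using less.hyps \<open>q \<noteq> []\<close> by blast
    have "p = concat (replicate (k * j) r)" using qk rj by (simp add: concat_replicate_mult)
    moreover have "k * j \<ge> 1" using qk rj by simp
    ultimately show ?thesis using rj by blast
  qed
qed

context wf_digraph
begin

lemma root_in_CPC:
  assumes "assembly_graph G lv le" "awalk z Z z" "Z \<noteq> []"
  shows "cyc (XL G lv le Z) \<in> CPC G lv le"
proof -
  have AG: "abstract_assembly_graph G lv le" using assms(1) unfolding assembly_graph_def by blast
  obtain R k where Rk: "primitive_walk R" "k \<ge> 1" "Z = concat (replicate k R)"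
    using primitive_root[OF assms(3)] by blast
  have R: "R \<noteq> []" using Rk assms(3) by auto
  obtain k' where k': "k = Suc k'" using Rk by (cases k) auto
  have Zs: "Z = R @ concat (replicate k' R)" using Rk k' by simp
  then obtain m where m: "awalk z R m" "awalk m (concat (replicate k' R)) z"
    using assms(2) by auto
  have "m = z"
  proof (cases k')
    case 0 then show ?thesis using m by (simp add: awalk_Nil_iff)
  next
    case (Suc k'')
    then have "awalk m (R @ concat (replicate k'' R)) z" using m by simp
    then obtain m' where "awalk m R m'" by auto
    then show ?thesis using awalk_ends[OF m(1)] R by blast
  qed
  then have Rw: "awalk z R z" using m by simp
  have XR: "XL G lv le R \<noteq> []" using XL_nonempty[OF assms(1) Rw R] .
  have "walk_label G lv le z R = lv z @ XL G lv le R" using walk_label_X[OF AG Rw] .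
  then have "cyc (XL G lv le R) \<in> CPC G lv le"
    unfolding CPC_def using Rw R Rk(1) by blast
  moreover have "cyc (XL G lv le Z) = cyc (XL G lv le R)"
    using Rk XR by (simp add: XL_power cyc_power)
  ultimately show ?thesis by simp
qed

lemma CPC_inv:
  assumes "abstract_assembly_graph G lv le" "cyc c \<in> CPC G lv le"
  shows "\<exists>z Z. awalk z Z z \<and> Z \<noteq> [] \<and> cyc (XL G lv le Z) = cyc c"
proof -
  obtain x z Z where "cyc c = cyc x" "awalk z Z z" "Z \<noteq> []"
    "walk_label G lv le z Z = lv z @ x"
    using assms(2) unfolding CPC_def by blast
  moreover have "walk_label G lv le z Z = lv z @ XL G lv le Z"
    using walk_label_X[OF assms(1) \<open>awalk z Z z\<close>] .
  ultimately show ?thesis by auto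
qed

end



lemma infix_split:
  assumes "pre @ K @ R = al @ v @ be" "length pre < length al" "length al + length v < length pre + length K"
  shows "\<exists>al' be'. al' \<noteq> [] \<and> be' \<noteq> [] \<and> K = al' @ v @ be'"
proof -
  define al' where "al' = drop (length pre) al"
  have al: "al = pre @ al'"
    using assms(1,2) unfolding al'_def
    by (metis append_eq_append_conv_if append_take_drop_id less_imp_le_nat)
  have KR: "K @ R = al' @ v @ be" using assms(1) al by simp
  have la: "al' \<noteq> []" using al assms(2) by auto
  define n where "n = length K - length al' - length v"
  have n: "n > 0" using assms(3) al unfolding n_def by simp
  have "K = take (length K) (K @ R)" by simp
  also have "\<dots> = al' @ v @ take n be"
    using KR assms(3) al unfolding n_def by (simp add: take_append)
  finally have K: "K = al' @ v @ take n be" .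
  have "length (K @ R) = length (al' @ v @ be)" using KR by simp
  then have "length be \<ge> n" unfolding n_def by simp
  then have "take n be \<noteq> []" using n by (cases be) auto
  then show ?thesis using K la by blast
qed

context wf_digraph
begin

lemma take_drop_awalk:
  assumes "awalk u W w"
  shows "awalk u (take i W) (awlast u (take i W)) \<and> awalk (awlast u (take i W)) (drop i W) w"
proof -
  have "awalk u (take i W @ drop i W) w" using assms by simp
  then show ?thesis by (simp only: awalk_append_iff)
qed

lemma seg_awalk:
  assumes "awalk u W w" "i \<le> j"
  shows "awalk (awlast u (take i W)) (drop i (take j W)) (awlast u (take j W))"
proof -
  have tj: "take j W = take i W @ drop i (take j W)" using assms(2)
    by (metis append_take_drop_id min.absorb1 take_take)
  have "awalk u (take j W) (awlast u (take j W))" using take_drop_awalk[OF assms(1)] by blast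
  then have "awalk u (take i W @ drop i (take j W)) (awlast u (take j W))" using tj by simp
  then show ?thesis by (simp only: awalk_append_iff)
qed

lemma XL_take_mono:
  assumes "i \<le> j"
  shows "length (XL G lv le (take i W)) \<le> length (XL G lv le (take j W))"
proof -
  have "take j W = take i W @ drop i (take j W)" using assms
    by (metis append_take_drop_id min.absorb1 take_take)
  then have "XL G lv le (take j W) = XL G lv le (take i W) @ XL G lv le (drop i (take j W))"
    by (metis XL_append)
  then show ?thesis by simp
qed

lemma exact_visit:
  assumes nr: "non_redundant G lv le" and AG: "abstract_assembly_graph G lv le"
    and W: "awalk u W w" and x: "x \<in> verts G"
    and occ: "lv u @ XL G lv le W = al @ lv x @ be"
    and i1: "i1 \<le> length W" "awlast u (take i1 W) = x"
       "length (lv u) + length (XL G lv le (take i1 W)) < length al + length (lv x)"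
    and i2: "i2 \<le> length W" "awlast u (take i2 W) = x"
       "length (lv u) + length (XL G lv le (take i2 W)) > length al + length (lv x)"
  shows "\<exists>i \<le> length W. awlast u (take i W) = x \<and>
           length (lv u) + length (XL G lv le (take i W)) = length al + length (lv x)"
proof (rule ccontr)
  assume nex: "\<not> ?thesis"
  define P where "P i = length (lv u) + length (XL G lv le (take i W))" for i
  define t where "t = length al + length (lv x)"
  have Pmono: "P i \<le> P j" if "i \<le> j" for i j
    unfolding P_def using XL_take_mono[OF that] by simp
  define S where "S = {i. i \<le> length W \<and> awlast u (take i W) = x \<and> P i < t}"
  have fS: "finite S" unfolding S_def by simp
  have i1S: "i1 \<in> S" unfolding S_def P_def t_def using i1 by simp
  define ia where "ia = Max S"
  have iaS: "ia \<in> S" unfolding ia_def using fS i1S Max_in by blast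
  have ia_max: "i \<le> ia" if "i \<in> S" for i unfolding ia_def using fS that by simp
  define T where "T = {j. ia < j \<and> j \<le> length W \<and> awlast u (take j W) = x}"
  have i2T: "i2 \<in> T"
  proof -
    have "\<not> i2 \<le> ia"
    proof
      assume "i2 \<le> ia"
      then have "P i2 \<le> P ia" by (rule Pmono)
      moreover have "P ia < t" using iaS unfolding S_def by simp
      ultimately show False using i2(3) unfolding P_def t_def by simp
    qed
    then show ?thesis unfolding T_def using i2 by simp
  qed
  define ib where "ib = (LEAST j. j \<in> T)"
  have ibT: "ib \<in> T" unfolding ib_def using i2T by (rule LeastI)
  have ib_min: "ib \<le> j" if "j \<in> T" for j unfolding ib_def using that by (rule Least_le)
  have ia: "ia \<le> length W" "awlast u (take ia W) = x" "P ia < t" using iaS unfolding S_def by auto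
  have ib: "ia < ib" "ib \<le> length W" "awlast u (take ib W) = x" using ibT unfolding T_def by auto
  have Pib: "P ib > t"
  proof -
    have "\<not> P ib < t"
    proof
      assume "P ib < t"
      then have "ib \<in> S" unfolding S_def using ib by simp
      then show False using ia_max ib(1) by fastforce
    qed
    moreover have "P ib \<noteq> t" using nex ib unfolding P_def t_def by blast
    ultimately show ?thesis by simp
  qed
  define Sg where "Sg = drop ia (take ib W)"
  have Sgw: "awalk x Sg x" using seg_awalk[OF W, of ia ib] ib ia unfolding Sg_def by simp
  have tib: "take ib W = take ia W @ Sg" unfolding Sg_def using ib(1)
    by (metis append_take_drop_id less_imp_le_nat min.absorb1 take_take)
  have lSg: "length Sg = ib - ia" unfolding Sg_def using ib by simp
  have wia: "awalk u (take ia W) x" using take_drop_awalk[OF W, of ia] ia by simp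
  obtain pre where pre: "lv u @ XL G lv le (take ia W) = pre @ lv x"
    using label_suffix[OF AG wia] unfolding suffix_def by blast
  have L: "lv u @ XL G lv le W = pre @ (lv x @ XL G lv le Sg) @ XL G lv le (drop ib W)"
  proof -
    have "W = take ia W @ Sg @ drop ib W" using tib by (metis append.assoc append_take_drop_id)
    then have "XL G lv le W = XL G lv le (take ia W) @ XL G lv le Sg @ XL G lv le (drop ib W)"
      by (metis XL_append)
    then show ?thesis using pre by (metis append.assoc)
  qed
  have lpre: "length pre + length (lv x) = P ia" unfolding P_def using arg_cong[OF pre, of length] by simp
  have PibK: "P ib = length pre + length (lv x @ XL G lv le Sg)"
    unfolding P_def using arg_cong[OF pre, of length] tib by simp
  have "\<exists>al' be'. al' \<noteq> [] \<and> be' \<noteq> [] \<and> lv x @ XL G lv le Sg = al' @ lv x @ be'"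
  proof (rule infix_split)
    show "pre @ (lv x @ XL G lv le Sg) @ XL G lv le (drop ib W) = al @ lv x @ be" using L occ by simp
    show "length pre < length al" using lpre ia(3) unfolding t_def by simp
    show "length al + length (lv x) < length pre + length (lv x @ XL G lv le Sg)"
      using PibK Pib unfolding t_def by simp
  qed
  then have pi: "proper_infix (walk_label G lv le x []) (walk_label G lv le x Sg)"
    unfolding proper_infix_def using walk_label_X[OF AG Sgw] by (simp add: walk_label_def)
  have "awalk x [] x" using x by (simp add: awalk_Nil_iff)
  then have "inner_subwalk G x [] x Sg" using nr Sgw pi unfolding non_redundant_def by blast
  then obtain as bs where asbs: "as \<noteq> []" "bs \<noteq> []" "Sg = as @ bs" "awalk x as x"
    unfolding inner_subwalk_def by auto
  define j where "j = ia + length as"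
  have "length as < length Sg" using asbs by simp
  have la: "length as + length bs = ib - ia" using asbs(3) lSg by simp
  have lab: "length as > 0" "length bs > 0" using asbs by auto
  have j: "ia < j" "j < ib" using la lab ib(1) unfolding j_def by linarith+
  have tj: "take j W = take ia W @ as"
  proof -
    have "take j W = take j (take ib W)" using j by simp
    also have "\<dots> = take ia W @ as" unfolding tib j_def using asbs(3) ia ib
      by (simp add: take_append min_def)
    finally show ?thesis .
  qed
  have "awlast u (take j W) = x"
    using tj ia(2) awlast_closed[OF asbs(4)] by (simp add: awlast_append)
  then have "j \<in> T" unfolding T_def using j ib by simp
  then show False using ib_min j by fastforce
qed

end


lemma cyc_shift:
  assumes "c \<noteq> []" "y \<noteq> []" "cyc c = cyc y"
  shows "\<exists>d. \<forall>j. pn c j = pn y (j + d)"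
proof -
  define w where "w = (\<lambda>i::int. c ! nat ((i + 0) mod int (length c)))"
  have "w \<in> cyc c" unfolding cyc_def w_def by blast
  then have "w \<in> cyc y" using assms(3) by simp
  then obtain k where k: "\<forall>i. w i = y ! nat ((i + k) mod int (length y))"
    unfolding cyc_def by blast
  define d where "d = nat (k mod int (length y))"
  have kd: "k mod int (length y) = int d" unfolding d_def using assms(2) by simp
  have "pn c j = pn y (j + d)" for j
  proof -
    have "pn c j = w (int j)" unfolding pn_def w_def by (simp add: zmod_int[symmetric])
    also have "\<dots> = y ! nat ((int j + k) mod int (length y))" using k by simp
    also have "(int j + k) mod int (length y) = int ((j + d) mod length y)"
    proof -
      have "(int j + k) mod int (length y) = (int j + k mod int (length y)) mod int (length y)"
        by (simp add: mod_add_right_eq)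
      also have "\<dots> = int ((j + d) mod length y)" using kd by (simp add: zmod_int)
      finally show ?thesis .
    qed
    finally show ?thesis unfolding pn_def by simp
  qed
  then show ?thesis by blast
qed

lemma periodic_occurrence:
  assumes "y \<noteq> []" "\<forall>i<length s. s ! i = pn y (e + i)" "e + length s \<le> m * length y"
  shows "\<exists>al be. concat (replicate m y) = al @ s @ be \<and> length al = e"
proof -
  define Y where "Y = concat (replicate m y)"
  have lY: "length Y = m * length y" unfolding Y_def by simp
  have s: "take (length s) (drop e Y) = s"
  proof (rule nth_equalityI)
    show "length (take (length s) (drop e Y)) = length s" using lY assms(3) by simp
    fix i assume "i < length (take (length s) (drop e Y))"
    then have i: "i < length s" by simp
    have "take (length s) (drop e Y) ! i = Y ! (e + i)" using i lY assms(3) by simp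
    also have "\<dots> = pn y (e + i)" unfolding Y_def pn_def
      using nth_concat_replicate[of "e + i" m y] i assms(3) by simp
    finally show "take (length s) (drop e Y) ! i = s ! i" using assms(2) i by simp
  qed
  have "Y = take e Y @ take (length s) (drop e Y) @ drop (length s) (drop e Y)"
    by (simp only: append_take_drop_id)
  then have "Y = take e Y @ s @ drop (length s) (drop e Y)" using s by simp
  moreover have "length (take e Y) = e" using lY assms(3) by simp
  ultimately show ?thesis unfolding Y_def by blast
qed

context wf_digraph
begin

lemma visit_from_infix:
  assumes nr: "non_redundant G lv le" and AG: "abstract_assembly_graph G lv le"
    and x: "x \<in> verts G" and Q: "awalk z Q w"
    and inf: "lv z @ XL G lv le Q = al @ lv x @ be" "al \<noteq> []" "be \<noteq> []"
  shows "\<exists>i \<le> length Q. awlast z (take i Q) = x"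
proof -
  have wl: "walk_label G lv le z Q = al @ lv x @ be" using walk_label_X[OF AG Q] inf(1) by simp
  have w0: "walk_label G lv le x [] = lv x" by (simp add: walk_label_def)
  have pi: "proper_infix (walk_label G lv le x []) (walk_label G lv le z Q)"
    unfolding proper_infix_def w0 wl using inf(2,3) by blast
  have "awalk x [] x" using x by (simp add: awalk_Nil_iff)
  then have "inner_subwalk G x [] z Q" using nr Q pi unfolding non_redundant_def by blast
  then obtain as bs where asbs: "Q = as @ bs" "awalk z as x"
    unfolding inner_subwalk_def by auto
  have "take (length as) Q = as" using asbs by simp
  then show ?thesis using asbs awlast_closed[OF asbs(2)] by (intro exI[of _ "length as"]) auto
qed

end


context wf_digraph
begin

lemma extract_walk:
  assumes asm: "assembly_graph G lv le" and nr: "non_redundant G lv le"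
    and x: "x \<in> verts G" and c: "c \<noteq> []" "suffix (lv x) (lv x @ c)"
    and Z: "awalk z Z z" "Z \<noteq> []" and cy: "cyc (XL G lv le Z) = cyc c"
  shows "\<exists>A. awalk x A x \<and> XL G lv le A = c"
proof -
  have AG: "abstract_assembly_graph G lv le" using asm unfolding assembly_graph_def by blast
  define y where "y = XL G lv le Z"
  have y: "y \<noteq> []" unfolding y_def using XL_nonempty[OF asm Z] .
  have cyy: "cyc c = cyc y" using cy unfolding y_def by simp
  obtain d where d: "\<forall>j. pn c j = pn y (j + d)" using cyc_shift[OF c(1) y cyy] by blast
  define v where "v = lv x"
  define off where "off = length c - length v mod length c"
  have sp: "suffix v (v @ c)" using c(2) unfolding v_def .
  have per: "(v @ c) ! i = pn y (i + off + d)" if "i < length v + length c" for i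
  proof -
    have "(v @ c) ! i = pn c (i + off)" using suffix_period[OF c(1) sp that] unfolding off_def .
    also have "\<dots> = pn y (i + off + d)" using d by simp
    finally show ?thesis .
  qed
  define ly where "ly = length y"
  have ly: "ly \<ge> 1" unfolding ly_def using y by (cases y) auto
  define m0 where "m0 = off + d + length v + 2"
  define K where "K = off + d + length v + length c + 2"
  define Zp where "Zp k = concat (replicate k Z)" for k
  have Zpw: "awalk z (Zp k) z" for k unfolding Zp_def using awalk_power[OF Z(1)] .
  have XZp: "XL G lv le (Zp k) = concat (replicate k y)" for k unfolding Zp_def y_def by (rule XL_power)
  have lXZp: "length (XL G lv le (Zp k)) = k * ly" for k unfolding XZp ly_def by simp
  have ge: "n * ly \<ge> n" for n using ly by simp
  obtain al be where albe: "concat (replicate m0 y) = al @ v @ be" "length al = ly + off + d"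
  proof -
    have "\<forall>i<length v. v ! i = pn y (ly + off + d + i)"
    proof (intro allI impI)
      fix i assume i: "i < length v"
      have "v ! i = (v @ c) ! i" using i by (simp add: nth_append)
      also have "\<dots> = pn y (i + off + d)" using per i by simp
      also have "\<dots> = pn y (i + off + d + length y)" by (simp only: pn_add_len)
      finally show "v ! i = pn y (ly + off + d + i)" unfolding ly_def by (simp add: algebra_simps)
    qed
    moreover have "ly + off + d + length v \<le> m0 * ly"
    proof -
      have "m0 * ly = (off + d + length v) * ly + 2 * ly" unfolding m0_def by (simp add: algebra_simps)
      then show ?thesis using ge[of "off + d + length v"] by linarith
    qed
    ultimately have "\<exists>al be. concat (replicate m0 y) = al @ v @ be \<and> length al = ly + off + d"
      using periodic_occurrence[OF y, of v "ly + off + d" m0] by (simp add: ly_def)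
    then show ?thesis using that by blast
  qed
  have be: "be \<noteq> []"
  proof
    assume "be = []"
    then have "m0 * ly = ly + off + d + length v" using arg_cong[OF albe(1), of length] albe(2)
      unfolding ly_def by simp
    moreover have "m0 * ly = (off + d + length v) * ly + 2 * ly" unfolding m0_def by (simp add: algebra_simps)
    ultimately show False using ge[of "off + d + length v"] ly by linarith
  qed
  have inf1: "lv z @ XL G lv le (Zp m0) = (lv z @ al) @ lv x @ be" using albe XZp unfolding v_def by simp
  have ne1: "lv z @ al \<noteq> []" using albe(2) ly by auto
  obtain i0 where i0: "i0 \<le> length (Zp m0)" "awlast z (take i0 (Zp m0)) = x"
    using visit_from_infix[OF nr AG x Zpw inf1 ne1 be] by blast
  have li0: "length (XL G lv le (take i0 (Zp m0))) \<le> m0 * ly"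
    using XL_take_mono[where i=i0 and j="length (Zp m0)" and W="Zp m0" and lv=lv and le=le] i0(1) lXZp by simp
  define W where "W = Zp m0 @ Zp K @ Zp m0"
  have Ww: "awalk z W z" unfolding W_def by (rule awalk_appendI[OF Zpw awalk_appendI[OF Zpw Zpw]])
  have XW: "XL G lv le W = concat (replicate (m0 + K + m0) y)"
    unfolding W_def using XZp by (simp add: concat_replicate_add)
  define e where "e = (m0 + 1) * ly + off + d"
  obtain al2 be2 where ab2: "concat (replicate (m0 + K + m0) y) = al2 @ (v @ c) @ be2" "length al2 = e"
  proof -
    have "\<forall>i<length (v @ c). (v @ c) ! i = pn y (e + i)"
    proof (intro allI impI)
      fix i assume i: "i < length (v @ c)"
      have "(v @ c) ! i = pn y (i + off + d)" using per i by simp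
      also have "\<dots> = pn y (i + off + d + (m0 + 1) * length y)" by (simp only: pn_add_mult)
      finally show "(v @ c) ! i = pn y (e + i)" unfolding e_def ly_def by (simp add: algebra_simps)
    qed
    moreover have "e + length (v @ c) \<le> (m0 + K + m0) * ly"
    proof -
      have "(m0 + K + m0) * ly = (m0 + 1) * ly + (off + d + length v + length c + 1) * ly + m0 * ly"
        unfolding K_def by (simp add: algebra_simps)
      then show ?thesis unfolding e_def length_append using ge[of "off + d + length v + length c + 1"] by linarith
    qed
    ultimately have "\<exists>al be. concat (replicate (m0 + K + m0) y) = al @ (v @ c) @ be \<and> length al = e"
      using periodic_occurrence[OF y, of "v @ c" e "m0 + K + m0"] by (simp add: ly_def)
    then show ?thesis using that by blast
  qed
  obtain c2 where c2: "v @ c = c2 @ v" using c(2) unfolding suffix_def v_def by blast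
  have lc2: "length c2 = length c" using arg_cong[OF c2, of length] by simp
  define L where "L = lv z @ XL G lv le W"
  have L1: "L = (lv z @ al2) @ lv x @ (c @ be2)" unfolding L_def XW ab2(1) v_def by simp
  have L2: "L = (lv z @ al2 @ c2) @ lv x @ be2"
  proof -
    have "L = lv z @ al2 @ (v @ c) @ be2" unfolding L_def XW ab2(1) by simp
    then have "L = lv z @ al2 @ (c2 @ v) @ be2" by (simp only: c2)
    then show ?thesis unfolding v_def by simp
  qed
  have tW1: "take i0 W = take i0 (Zp m0)" unfolding W_def using i0(1) by simp
  define i2 where "i2 = length (Zp m0) + length (Zp K) + i0"
  have tW2: "take i2 W = Zp m0 @ Zp K @ take i0 (Zp m0)" unfolding W_def i2_def by simp
  have lW: "length W = length (Zp m0) + length (Zp K) + length (Zp m0)" unfolding W_def by simp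
  have v1: "awlast z (take i0 W) = x" using tW1 i0 by simp
  have v2: "awlast z (take i2 W) = x"
  proof -
    have "awlast z (Zp m0 @ Zp K) = z" by (rule awlast_closed[OF awalk_appendI[OF Zpw Zpw]])
    then show ?thesis unfolding tW2 using i0(2) by (metis append.assoc awlast_append)
  qed
  have P1: "length (lv z) + length (XL G lv le (take i0 W)) \<le> length (lv z) + m0 * ly"
    using li0 tW1 by simp
  have P2: "length (lv z) + length (XL G lv le (take i2 W)) \<ge> length (lv z) + m0 * ly + K * ly"
    unfolding tW2 using lXZp by simp
  have ineq1: "m0 * ly < e" unfolding e_def using ly by (simp add: algebra_simps)
  have ineq2: "e + length v + length c < m0 * ly + K * ly"
  proof -
    have "K * ly = (off + d + length v + length c + 1) * ly + ly" unfolding K_def by (simp add: algebra_simps)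
    then show ?thesis unfolding e_def using ge[of "off + d + length v + length c + 1"]
      by (simp add: algebra_simps)
  qed
  have i0W: "i0 \<le> length W" using i0(1) lW by simp
  have i2W: "i2 \<le> length W" using i0(1) lW unfolding i2_def by simp
  obtain j1 where j1: "j1 \<le> length W" "awlast z (take j1 W) = x"
    "length (lv z) + length (XL G lv le (take j1 W)) = length (lv z @ al2) + length (lv x)"
    using exact_visit[OF nr AG Ww x L1[unfolded L_def] i0W v1 _ i2W v2] P1 P2 ineq1 ineq2 ab2(2)
    unfolding v_def by fastforce
  obtain j2 where j2: "j2 \<le> length W" "awlast z (take j2 W) = x"
    "length (lv z) + length (XL G lv le (take j2 W)) = length (lv z @ al2 @ c2) + length (lv x)"
    using exact_visit[OF nr AG Ww x L2[unfolded L_def] i0W v1 _ i2W v2] P1 P2 ineq1 ineq2 ab2(2) lc2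
    unfolding v_def by fastforce
  have j12: "j1 \<le> j2"
  proof (rule ccontr)
    assume "\<not> j1 \<le> j2"
    then have "length (XL G lv le (take j2 W)) \<le> length (XL G lv le (take j1 W))"
      using XL_take_mono[of j2 j1] by simp
    then show False using j1(3) j2(3) lc2 c(1) by simp
  qed
  define A where "A = drop j1 (take j2 W)"
  have Aw: "awalk x A x" using seg_awalk[OF Ww j12] j1 j2 unfolding A_def by simp
  have tj2: "take j2 W = take j1 W @ A" unfolding A_def using j12
    by (metis append_take_drop_id min.absorb1 take_take)
  have pref: "take (length (lv z) + length (XL G lv le (take j W))) L = lv z @ XL G lv le (take j W)" for j
  proof -
    have "L = (lv z @ XL G lv le (take j W)) @ XL G lv le (drop j W)"
      unfolding L_def by (metis XL_append append.assoc append_take_drop_id)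
    then show ?thesis by (metis append_eq_conv_conj length_append)
  qed
  have e1: "lv z @ XL G lv le (take j1 W) = lv z @ al2 @ lv x"
    using pref[of j1] j1(3) L1 by simp
  have e2: "lv z @ XL G lv le (take j2 W) = lv z @ al2 @ lv x @ c"
  proof -
    have "lv z @ XL G lv le (take j2 W) = take (length (lv z @ al2 @ c2) + length (lv x)) L"
      using pref[of j2] j2(3) by simp
    also have "\<dots> = lv z @ al2 @ c2 @ lv x" unfolding L2 by simp
    also have "\<dots> = lv z @ al2 @ lv x @ c" using c2 unfolding v_def by simp
    finally show ?thesis .
  qed
  have "XL G lv le A = c" using e1 e2 tj2 by simp
  then show ?thesis using Aw by blast
qed

end


lemma sublist_window:
  assumes "L = al @ s @ be" "L = a2 @ t @ b2" "length al \<le> length a2"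
    "length a2 + length t \<le> length al + length s"
  shows "sublist t s"
proof -
  define k where "k = length a2 - length al"
  have "t = take (length t) (drop (length a2) L)" using assms(2) by simp
  also have "drop (length a2) L = drop k (s @ be)"
    unfolding assms(1) k_def using assms(3) by (simp add: drop_append)
  also have "take (length t) (drop k (s @ be)) = take (length t) (drop k s)"
    using assms(3,4) unfolding k_def by (simp add: drop_append take_append)
  finally have t: "t = take (length t) (drop k s)" .
  have "sublist (take (length t) (drop k s)) s"
    using sublist_order.order_trans[OF sublist_take sublist_drop] .
  then show ?thesis by (simp only: t[symmetric])
qed

context wf_digraph
begin

lemma vertex_conductor:
  assumes asm: "assembly_graph G lv le" and nr: "non_redundant G lv le" and x: "x \<in> verts G"
  shows "conductor (CPC G lv le) (lv x)"
  unfolding conductor_def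
proof (intro allI impI)
  fix a b :: "'c list"
  assume a: "a \<noteq> []" and b: "b \<noteq> []" and sa: "\<exists>a'. lv x @ a = a' @ lv x"
    and sb: "\<exists>b'. lv x @ b = b' @ lv x"
  have AG: "abstract_assembly_graph G lv le" using asm unfolding assembly_graph_def by blast
  have sa': "suffix (lv x) (lv x @ a)" using sa unfolding suffix_def by metis
  have sb': "suffix (lv x) (lv x @ b)" using sb unfolding suffix_def by metis
  obtain a' where a': "lv x @ a = a' @ lv x" using sa by blast
  obtain b' where b': "lv x @ b = b' @ lv x" using sb by blast
  have sab: "suffix (lv x) (lv x @ a @ b)"
  proof -
    have "lv x @ a @ b = a' @ b' @ lv x" using a' b' by (metis append.assoc)
    then show ?thesis unfolding suffix_def by (metis append.assoc)
  qed
  have get: "\<exists>A. awalk x A x \<and> XL G lv le A = c"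
    if c1: "c \<noteq> []" and c2: "suffix (lv x) (lv x @ c)" and c3: "cyc c \<in> CPC G lv le" for c
  proof -
    obtain z Z where "awalk z Z z" "Z \<noteq> []" "cyc (XL G lv le Z) = cyc c"
      using CPC_inv[OF AG c3] by blast
    then show ?thesis using extract_walk[OF asm nr x c1 c2] by blast
  qed
  show "cyc (a @ b) \<in> CPC G lv le \<longleftrightarrow> cyc a \<in> CPC G lv le \<and> cyc b \<in> CPC G lv le"
  proof
    assume "cyc a \<in> CPC G lv le \<and> cyc b \<in> CPC G lv le"
    then obtain A B where A: "awalk x A x" "XL G lv le A = a" and B: "awalk x B x" "XL G lv le B = b"
      using get[OF a sa'] get[OF b sb'] by blast
    have AB: "awalk x (A @ B) x" using awalk_appendI[OF A(1) B(1)] .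
    have "A @ B \<noteq> []" using A a by auto
    then have "cyc (XL G lv le (A @ B)) \<in> CPC G lv le" using root_in_CPC[OF asm AB] by blast
    then show "cyc (a @ b) \<in> CPC G lv le" using A B by simp
  next
    assume "cyc (a @ b) \<in> CPC G lv le"
    then obtain W where W: "awalk x W x" "XL G lv le W = a @ b"
      using get[of "a @ b"] a sab by blast
    have occ: "lv x @ XL G lv le W = a' @ lv x @ b" using W(2) a' by simp
    have la': "length a' = length a" using arg_cong[OF a', of length] by simp
    have v0: "awlast x (take 0 W) = x" by simp
    have vW: "awlast x (take (length W) W) = x" using awlast_closed[OF W(1)] by simp
    obtain i where i: "i \<le> length W" "awlast x (take i W) = x"
      "length (lv x) + length (XL G lv le (take i W)) = length a' + length (lv x)"
    proof -
      have z0: "0 \<le> length W" and lW: "length W \<le> length W" by simp_all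
      have p1: "length (lv x) + length (XL G lv le (take 0 W)) < length a' + length (lv x)"
        using la' a by simp
      have p2: "length a' + length (lv x) < length (lv x) + length (XL G lv le (take (length W) W))"
        using la' b W(2) by simp
      show ?thesis using exact_visit[OF nr AG W(1) x occ z0 v0 p1 lW vW p2] that by blast
    qed
    have Aw: "awalk x (take i W) x" and Bw: "awalk x (drop i W) x"
      using take_drop_awalk[OF W(1), of i] i(2) by auto
    have "XL G lv le (take i W) @ XL G lv le (drop i W) = a @ b"
      using W(2) by (metis XL_append append_take_drop_id)
    moreover have "length (XL G lv le (take i W)) = length a" using i(3) la' by simp
    ultimately have XA: "XL G lv le (take i W) = a" and XB: "XL G lv le (drop i W) = b"
      by (metis append_eq_append_conv)+
    have "take i W \<noteq> []" using XA a by (metis XL_Nil)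
    moreover have "drop i W \<noteq> []" using XB b by (metis XL_Nil)
    ultimately show "cyc a \<in> CPC G lv le \<and> cyc b \<in> CPC G lv le"
      using root_in_CPC[OF asm Aw] root_in_CPC[OF asm Bw] XA XB by simp
  qed
qed

lemma long_infix:
  assumes AG: "abstract_assembly_graph G lv le"
  shows "awalk u p w \<Longrightarrow> p \<noteq> [] \<Longrightarrow> lv u @ XL G lv le p = al @ s @ be \<Longrightarrow>
    (\<forall>e\<in>set p. length (le e) \<le> length s) \<Longrightarrow> \<exists>y\<in>verts G. sublist (lv y) s"
proof (induction p arbitrary: u al)
  case Nil then show ?case by simp
next
  case (Cons e es)
  have e: "e \<in> arcs G" "tail G e = u" "awalk (head G e) es w" using Cons.prems(1) by (auto simp: awalk_Cons_iff)
  obtain \<alpha> where \<alpha>: "le e = \<alpha> @ lv (head G e)" using le_suffix[OF AG e(1)] unfolding suffix_def by blast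
  have L0: "lv u @ XL G lv le (e # es) = le e @ XL G lv le es"
    using le_ext[OF AG e(1)] e(2) by simp
  have L: "lv u @ XL G lv le (e # es) = \<alpha> @ lv (head G e) @ XL G lv le es"
    unfolding L0 \<alpha> by simp
  have les: "length (le e) \<le> length s" using Cons.prems(4) by simp
  show ?case
  proof (cases "length al \<le> length \<alpha>")
    case True
    have "sublist (lv (head G e)) s"
    proof (rule sublist_window)
      show "lv u @ XL G lv le (e # es) = al @ s @ be" by fact
      show "lv u @ XL G lv le (e # es) = \<alpha> @ lv (head G e) @ XL G lv le es" by fact
      show "length al \<le> length \<alpha>" by fact
      show "length \<alpha> + length (lv (head G e)) \<le> length al + length s"
        using les \<alpha> by simp
    qed
    then show ?thesis using head_in_verts[OF e(1)] by blast
  next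
    case False
    define al' where "al' = drop (length \<alpha>) al"
    have E: "al @ s @ be = \<alpha> @ lv (head G e) @ XL G lv le es" using Cons.prems(3) L by simp
    have "take (length \<alpha>) (al @ s @ be) = \<alpha>" unfolding E by simp
    then have "take (length \<alpha>) al = \<alpha>" using False by simp
    then have al: "al = \<alpha> @ al'" unfolding al'_def using append_take_drop_id[of "length \<alpha>" al] by simp
    have rest: "lv (head G e) @ XL G lv le es = al' @ s @ be" using Cons.prems(3) L al by simp
    have al'ne: "al' \<noteq> []" using al False by auto
    show ?thesis
    proof (cases "es = []")
      case True
      then have "length (lv (head G e)) = length al' + length s + length be"
        using arg_cong[OF rest, of length] by simp
      moreover have "length (lv (head G e)) \<le> length (le e)" using \<alpha> by simp
      moreover have "length al' > 0" using al'ne by simp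
      ultimately have False using les by linarith
      then show ?thesis ..
    next
      case False
      have "\<forall>e\<in>set es. length (le e) \<le> length s" using Cons.prems(4) by simp
      then show ?thesis using Cons.IH[OF e(3) False rest] by blast
    qed
  qed
qed

end

theorem theorem5:
  fixes G :: "('v, 'e) pre_digraph"
    and lv :: "'v \<Rightarrow> 'a::finite list"
    and le :: "'e \<Rightarrow> 'a list"
    and C :: "'a cyclic set"
  assumes "assembly_graph G lv le"
    and "non_redundant G lv le"
    and "C = CPC G lv le"
  shows "(\<forall>u s. conductor C u \<and> sublist u s \<longrightarrow> conductor C s)
       \<and> (\<forall>v\<in>verts G. conductor C (lv v))
       \<and> (\<forall>e\<in>arcs G. conductor C (le e))
       \<and> (\<forall>u p u'. pre_digraph.awalk G u p u' \<longrightarrow> conductor C (walk_label G lv le u p))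
       \<and> (\<forall>s. \<not> substring_of C s \<longrightarrow> conductor C s)
       \<and> (\<forall>s. (\<forall>e\<in>arcs G. length (le e) \<le> length s) \<longrightarrow> conductor C s)"
proof -
  have AG: "abstract_assembly_graph G lv le" using assms(1) unfolding assembly_graph_def by blast
  have wf: "wf_digraph G" using AG unfolding abstract_assembly_graph_def
    using fin_digraph.axioms(1) by blast
  have P1: "\<forall>u s. conductor C u \<and> sublist u s \<longrightarrow> conductor C s"
    using conductor_sublist by blast
  have P2: "\<forall>v\<in>verts G. conductor C (lv v)"
    using wf_digraph.vertex_conductor[OF wf assms(1,2)] assms(3) by blast
  have P3: "\<forall>e\<in>arcs G. conductor C (le e)"
  proof
    fix e assume e: "e \<in> arcs G"
    have "tail G e \<in> verts G" using wf_digraph.tail_in_verts[OF wf e] .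
    moreover have "sublist (lv (tail G e)) (le e)"
      using wf_digraph.le_ext[OF wf AG e] by (metis sublist_append_rightI)
    ultimately show "conductor C (le e)" using P2 conductor_sublist by blast
  qed
  have P4: "\<forall>u p u'. pre_digraph.awalk G u p u' \<longrightarrow> conductor C (walk_label G lv le u p)"
  proof (intro allI impI)
    fix u p u' assume w: "pre_digraph.awalk G u p u'"
    have "u \<in> verts G" using wf_digraph.awalk_hd_in_verts[OF wf w] .
    moreover have "sublist (lv u) (walk_label G lv le u p)"
      using wf_digraph.walk_label_X[OF wf AG w] by (metis sublist_append_rightI)
    ultimately show "conductor C (walk_label G lv le u p)" using P2 conductor_sublist by blast
  qed
  have P5: "\<forall>s. \<not> substring_of C s \<longrightarrow> conductor C s"
    using conductor_nonsubstring by blast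
  have P6: "\<forall>s. (\<forall>e\<in>arcs G. length (le e) \<le> length s) \<longrightarrow> conductor C s"
  proof (intro allI impI)
    fix s :: "'a list"
    assume long: "\<forall>e\<in>arcs G. length (le e) \<le> length s"
    show "conductor C s"
    proof (cases "substring_of C s")
      case False then show ?thesis using P5 by blast
    next
      case True
      then obtain c w k where c: "c \<in> CPC G lv le" and w: "w \<in> c"
        and k: "\<forall>i<length s. w (k + int i) = s ! i"
        unfolding substring_of_def assms(3) by blast
      then obtain x0 z Z where cx: "c = cyc x0" and Z: "pre_digraph.awalk G z Z z" "Z \<noteq> []"
        and wl: "walk_label G lv le z Z = lv z @ x0"
        unfolding CPC_def by blast
      have x0: "x0 = XL G lv le Z" using wl wf_digraph.walk_label_X[OF wf AG Z(1)] by simp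
      have x0ne: "x0 \<noteq> []" using wf_digraph.XL_nonempty[OF wf assms(1) Z] x0 by simp
      obtain k' where k': "\<forall>i. w i = x0 ! nat ((i + k') mod int (length x0))"
        using w cx unfolding cyc_def by blast
      define m where "m = nat ((k + k') mod int (length x0))"
      have sm: "\<forall>i<length s. s ! i = pn x0 (m + i)"
      proof (intro allI impI)
        fix i assume i: "i < length s"
        have "s ! i = x0 ! nat ((k + int i + k') mod int (length x0))" using k k' i by simp
        also have "(k + int i + k') mod int (length x0) = int ((m + i) mod length x0)"
        proof -
          have "(k + int i + k') mod int (length x0) = ((k + k') + int i) mod int (length x0)"
            by (simp add: algebra_simps)
          also have "\<dots> = ((k + k') mod int (length x0) + int i) mod int (length x0)"
            by (simp add: mod_add_left_eq)
          also have "(k + k') mod int (length x0) = int m" unfolding m_def using x0ne by simp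
          finally show ?thesis by (simp add: zmod_int)
        qed
        finally show "s ! i = pn x0 (m + i)" unfolding pn_def by simp
      qed
      define N where "N = m + length s + 1"
      have "m + length s \<le> N * length x0"
      proof -
        have "length x0 \<ge> 1" using x0ne by (cases x0) auto
        then have "N \<le> N * length x0" by simp
        then show ?thesis unfolding N_def by linarith
      qed
      then obtain al be where ab: "concat (replicate N x0) = al @ s @ be"
        using periodic_occurrence[OF x0ne sm] by blast
      define ZN where "ZN = concat (replicate N Z)"
      have ZNw: "pre_digraph.awalk G z ZN z" unfolding ZN_def using wf_digraph.awalk_power[OF wf Z(1)] .
      have ZNne: "ZN \<noteq> []" unfolding ZN_def N_def using Z(2) by simp
      have "lv z @ XL G lv le ZN = (lv z @ al) @ s @ be" unfolding ZN_def XL_power x0[symmetric] ab by simp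
      moreover have "\<forall>e\<in>set ZN. length (le e) \<le> length s"
        using ZNw long unfolding pre_digraph.awalk_def by blast
      ultimately obtain y where "y \<in> verts G" "sublist (lv y) s"
        using wf_digraph.long_infix[OF wf AG ZNw ZNne] by blast
      then show ?thesis using P2 conductor_sublist by blast
    qed
  qed
  show ?thesis using P1 P2 P3 P4 P5 P6 by blast
qed


end
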